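(* Let $N=2^k$ for a positive integer $k$, let positive integers $N_s$ with $\sum_s N_s=N$ be given, and let $k_s=\lceil\lg N_s\rceil$. Consider any sAEDS with $|\mathcal X_s|=N_s$ such that, for each $s$, exactly $2^{k_s}-N_s$ states $x\in\mathcal X_s$ have $|\mathcal F^+_x|=2^{k-k_s+1}$ and the remaining $2N_s-2^{k_s}$ states have $|\mathcal F^+_x|=2^{k-k_s}$, each $\mathcal F^+_x$ being encoded by a fixed-length code of length $\lg|\mathcal F^+_x|$. Assume its state chain is irreducible, with stationary distribution $Q$. Then $$L\le H(p)+D(p\|q)+\sum_{s}p(s)\big(\nu_{N_s,\tilde Q_s}-\mu_{\mathrm{pi}}(N_s)\big)\le H(p)+D(p\|q)+\sum_s p(s)\nu_{N_s,\tilde Q_s},$$ where $0\le\mu_{\mathrm{pi}}(N_s)=k_s+1-2^{k_s}/N_s-\lg N_s\le\sigma$ with $\sigma=\lg\lg e+1-\lg e$, and $$0\le \nu_{N_s,\tilde Q_s}=\frac{2N_s-2^{k_s}}{N_s}-\sum_{x\in\check{\mathcal X}_s}\tilde Q_s(x)<\frac{2N_s-2^{k_s}}{N_s}\le1,$$ $\check{\mathcal X}_s$ being a set of $2N_s-2^{k_s}$ elements of $\mathcal X_s$ with the smallest values of $\tilde Q_s(x)$.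
   Context: Let $\mathcal S$ be a finite alphabet with $|\mathcal S|\ge 2$ and $p=\{p(s)\}$ a probability distribution with $p(s)>0$ for all $s$ (i.i.d. source). $\mathcal B=\{0,1\}^*$ (including the empty word), $l(\beta)$ the word length, $\lg=\log_2$. An AEDS with finite state set $\mathcal X$, $|\mathcal X|=N$, consists of maps $E_{\hat x}:\mathcal S\to\mathcal B$ and $F^-_{\hat x}:\mathcal S\to\mathcal X$ ($\hat x\in\mathcal X$) such that for every $x\in\mathcal X$ the words $E_{\hat x}(s)$ over all pairs $(\hat x,s)$ with $F^-_{\hat x}(s)=x$ are pairwise distinct and form a prefix-free set. The state chain is the Markov chain on $\mathcal X$ moving from $\hat x$ to $F^-_{\hat x}(s)$ with probability $p(s)$; for a stationary distribution $Q$ the average code length is $L=\sum_{\hat x}\sum_s p(s)Q(\hat x)l(E_{\hat x}(s))$. A state-divided AEDS (sAEDS) is an AEDS for which the sets $\mathcal X_s=\{F^-_{\hat x}(s):\hat x\in\mathcal X\}$ are pairwise disjoint with union $\mathcal X$; $N_s=|\mathcal X_s|$, $q(s)=N_s/N$. For $x\in\mathcal X_s$, $\mathcal F^+_x=\{\hat x: F^-_{\hat x}(s)=x\}$; for each $s$ these sets partition $\mathcal X$, and $\hat x\mapsto E_{\hat x}(s)$ is an injective prefix-free code on $\mathcal F^+_x$. For $x\in\mathcal X_s$, $\tilde Q_s(x)=\sum_{\hat x\in\mathcal F^+_x}Q(\hat x)$ (so $\tilde Q_s$ is a probability distribution on $\mathcal X_s$). $H(p)=-\sum_s p(s)\lg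 p(s)$, $D(p\|q)=\sum_s p(s)\lg(p(s)/q(s))$. *)

theory Defs
  imports Complex_Main "HOL-Library.Sublist" "HOL-Library.Cardinality"
begin

text \<open>Note that prefix includes
  equality, so this one condition captures both distinctness and prefix-freeness.\<close>
definition aeds :: "('x \<Rightarrow> 's \<Rightarrow> bool list) \<Rightarrow> ('x \<Rightarrow> 's \<Rightarrow> 'x) \<Rightarrow> bool" where
  "aeds E F \<longleftrightarrow>
     (\<forall>x a s b t. F a s = x \<and> F b t = x \<and> (a, s) \<noteq> (b, t) \<longrightarrow> \<not> prefix (E a s) (E b t))"

definition Xs :: "('x \<Rightarrow> 's \<Rightarrow> 'x) \<Rightarrow> 's \<Rightarrow> 'x set" where
  "Xs F s = range (\<lambda>xh. F xh s)"

definition saeds :: "('x \<Rightarrow> 's \<Rightarrow> bool list) \<Rightarrow> ('x \<Rightarrow> 's \<Rightarrow> 'x) \<Rightarrow> bool" where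
  "saeds E F \<longleftrightarrow> aeds E F \<and> (\<forall>s t. s \<noteq> t \<longrightarrow> Xs F s \<inter> Xs F t = {}) \<and> (\<Union>s. Xs F s) = UNIV"

definition Fplus :: "('x \<Rightarrow> 's \<Rightarrow> 'x) \<Rightarrow> 's \<Rightarrow> 'x \<Rightarrow> 'x set" where
  "Fplus F s x = {xh. F xh s = x}"

definition chain_edges :: "('s \<Rightarrow> real) \<Rightarrow> ('x \<Rightarrow> 's \<Rightarrow> 'x) \<Rightarrow> ('x \<times> 'x) set" where
  "chain_edges p F = {(xh, F xh s) | xh s. p s > 0}"

definition irreducible_chain :: "('s \<Rightarrow> real) \<Rightarrow> ('x \<Rightarrow> 's \<Rightarrow> 'x) \<Rightarrow> bool" where
  "irreducible_chain p F \<longleftrightarrow> (\<forall>x y. (x, y) \<in> (chain_edges p F)\<^sup>*)"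

definition stationary :: "('s::finite \<Rightarrow> real) \<Rightarrow> ('x::finite \<Rightarrow> 's \<Rightarrow> 'x) \<Rightarrow> ('x \<Rightarrow> real) \<Rightarrow> bool" where
  "stationary p F Q \<longleftrightarrow> (\<forall>x. Q x \<ge> 0) \<and> (\<Sum>x\<in>UNIV. Q x) = 1 \<and>
     (\<forall>x. Q x = (\<Sum>xh\<in>UNIV. \<Sum>s\<in>UNIV. if F xh s = x then Q xh * p s else 0))"

definition avg_len :: "('s::finite \<Rightarrow> real) \<Rightarrow> ('x::finite \<Rightarrow> real) \<Rightarrow> ('x \<Rightarrow> 's \<Rightarrow> bool list) \<Rightarrow> real" where
  "avg_len p Q E = (\<Sum>xh\<in>UNIV. \<Sum>s\<in>UNIV. p s * Q xh * real (length (E xh s)))"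

definition Qt :: "('x::finite \<Rightarrow> 's \<Rightarrow> 'x) \<Rightarrow> ('x \<Rightarrow> real) \<Rightarrow> 's \<Rightarrow> 'x \<Rightarrow> real" where
  "Qt F Q s x = (\<Sum>xh\<in>Fplus F s x. Q xh)"

definition entropy :: "('s::finite \<Rightarrow> real) \<Rightarrow> real" where
  "entropy p = - (\<Sum>s\<in>UNIV. p s * log 2 (p s))"

definition kl_div :: "('s::finite \<Rightarrow> real) \<Rightarrow> ('s \<Rightarrow> real) \<Rightarrow> real" where
  "kl_div p q = (\<Sum>s\<in>UNIV. p s * log 2 (p s / q s))"

definition ceil_lg :: "nat \<Rightarrow> nat" where
  "ceil_lg n = nat \<lceil>log 2 (real n)\<rceil>"

definition mu_pi :: "nat \<Rightarrow> real" where
  "mu_pi n = real (ceil_lg n) + 1 - 2 ^ ceil_lg n / real n - log 2 (real n)"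

definition sigma_const :: real where
  "sigma_const = log 2 (log 2 (exp 1)) + 1 - log 2 (exp 1)"

definition smallest_set :: "'x set \<Rightarrow> ('x \<Rightarrow> real) \<Rightarrow> nat \<Rightarrow> 'x set \<Rightarrow> bool" where
  "smallest_set A f m C \<longleftrightarrow> C \<subseteq> A \<and> card C = m \<and> (\<forall>x\<in>C. \<forall>y\<in>A - C. f x \<le> f y)"

definition nu_bound :: "nat \<Rightarrow> real" where
  "nu_bound n = (2 * real n - 2 ^ ceil_lg n) / real n"

text \<open>\nu_{N_s, \tilde Q_s}, with the set \check X_s given as C\<close>
definition nu_val :: "nat \<Rightarrow> ('x \<Rightarrow> real) \<Rightarrow> 'x set \<Rightarrow> real" where
  "nu_val n f C = nu_bound n - (\<Sum>x\<in>C. f x)"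

end

theory Submission imports Defs "HOL-Analysis.Convex" begin

lemma ceil_lg_bounds_real:
  assumes "n > 0"
  shows "real n \<le> 2 ^ ceil_lg n \<and> (2::real) ^ ceil_lg n < 2 * real n"
proof -
  have l0: "log 2 (real n) \<ge> 0" using assms by simp
  have c: "real (ceil_lg n) = of_int \<lceil>log 2 (real n)\<rceil>"
    unfolding ceil_lg_def using l0 by simp
  have a: "log 2 (real n) \<le> real (ceil_lg n)" using c by linarith
  have b: "real (ceil_lg n) < log 2 (real n) + 1" using c by linarith
  have "real n = 2 powr log 2 (real n)" using assms by simp
  also have "\<dots> \<le> 2 powr real (ceil_lg n)" using a by (intro powr_mono) auto
  also have "\<dots> = 2 ^ ceil_lg n" by (simp add: powr_realpow)
  finally have 1: "real n \<le> 2 ^ ceil_lg n" .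
  have "(2::real) ^ ceil_lg n = 2 powr real (ceil_lg n)" by (simp add: powr_realpow)
  also have "\<dots> < 2 powr (log 2 (real n) + 1)" using b by (intro powr_less_mono) auto
  also have "\<dots> = 2 * real n" using assms by (simp add: powr_add)
  finally have 2: "(2::real) ^ ceil_lg n < 2 * real n" .
  from 1 2 show ?thesis by simp
qed

lemma ceil_lg_bounds:
  assumes "n > 0"
  shows "n \<le> 2 ^ ceil_lg n \<and> 2 ^ ceil_lg n < 2 * n"
proof -
  have 1: "real n \<le> real (2 ^ ceil_lg n)" and 2: "real (2 ^ ceil_lg n) < real (2 * n)"
    using ceil_lg_bounds_real[OF assms] by simp_all
  show ?thesis using 1 2 by linarith
qed

lemma mu_pi_bounds:
  assumes "n > 0"
  shows "0 \<le> mu_pi n \<and> mu_pi n \<le> sigma_const"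
proof -
  define t where "t = 2 ^ ceil_lg n / real n"
  have N0: "real n > 0" using assms by simp
  have b1: "real n \<le> 2 ^ ceil_lg n" and b2: "(2::real) ^ ceil_lg n < 2 * real n"
    using ceil_lg_bounds_real[OF assms] by auto
  have t1: "1 \<le> t" unfolding t_def using b1 N0 by (simp add: divide_simps)
  have t2: "t < 2" unfolding t_def using b2 N0 by (simp add: divide_simps)
  have tpos: "t > 0" using t1 by simp
  have lt: "log 2 t = real (ceil_lg n) - log 2 (real n)"
  proof -
    have "log 2 t = log 2 (2 ^ ceil_lg n) - log 2 (real n)"
      unfolding t_def by (rule log_divide_pos) (use N0 in auto)
    also have "log 2 ((2::real) ^ ceil_lg n) = real (ceil_lg n)"
      by (simp add: log_nat_power)
    finally show ?thesis .
  qed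
  have mu: "mu_pi n = 1 + log 2 t - t"
    unfolding mu_pi_def using lt unfolding t_def by simp
  have "ln ((1 - (t-1)) *\<^sub>R 1 + (t-1) *\<^sub>R 2) \<ge> (1 - (t-1)) * ln 1 + (t-1) * ln (2::real)"
    by (rule concave_onD[OF ln_concave]) (use t1 t2 in auto)
  moreover have "(1 - (t-1)) *\<^sub>R 1 + (t-1) *\<^sub>R 2 = t" by (simp add: algebra_simps)
  ultimately have "ln t \<ge> (t-1) * ln 2" by simp
  then have "log 2 t \<ge> t - 1" unfolding log_def by (simp add: field_simps)
  then have lo: "0 \<le> mu_pi n" using mu by simp
  define c where "c = 1 / ln (2::real)"
  have cpos: "c > 0" unfolding c_def by simp
  have lc: "log 2 (exp 1) = c" unfolding c_def log_def by simp
  have "ln (t / c) \<le> t / c - 1" by (rule ln_le_minus_one) (use tpos cpos in simp)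
  moreover have "ln (t / c) = ln t - ln c" using tpos cpos by (simp add: ln_div)
  moreover have "t / c = t * ln 2" unfolding c_def by simp
  ultimately have "ln t - ln c \<le> t * ln 2 - 1" by simp
  then have "(ln t - t * ln 2) / ln 2 \<le> (ln c - 1) / ln 2"
    by (intro divide_right_mono) auto
  moreover have "(ln t - t * ln 2) / ln 2 = ln t / ln 2 - t" by (simp add: field_simps)
  moreover have "(ln c - 1) / ln 2 = ln c / ln 2 - c" unfolding c_def by (simp add: field_simps)
  ultimately have "ln t / ln 2 - t \<le> ln c / ln 2 - c" by simp
  then have "log 2 t - t \<le> log 2 c - c" unfolding log_def .
  then have hi: "mu_pi n \<le> sigma_const" using mu lc unfolding sigma_const_def by simp
  from lo hi show ?thesis by simp
qed

lemma sum_le_bij_compare: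
  fixes f :: "'a \<Rightarrow> real"
  assumes "finite X" "finite Y" "card X = card Y" "\<forall>x\<in>X. \<forall>y\<in>Y. f x \<le> f y"
  shows "sum f X \<le> sum f Y"
proof -
  obtain g where g: "bij_betw g X Y" using assms(1,2,3) by (metis bij_betw_iff_card)
  show ?thesis
  proof (cases "X = {}")
    case True then show ?thesis using assms by simp
  next
    case False
    have "sum f X \<le> sum (f \<circ> g) X"
      using g assms(4) by (intro sum_mono) (auto simp: bij_betw_def)
    also have "\<dots> = sum f Y" using g sum.reindex[of g X f] by (simp add: bij_betw_def)
    finally show ?thesis .
  qed
qed

lemma smallest_sum_le:
  fixes f :: "'a \<Rightarrow> real"
  assumes "finite A" "C \<subseteq> A" "B \<subseteq> A" "card B = card C" "\<forall>x\<in>C. \<forall>y\<in>A - C. f x \<le> f y"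
  shows "sum f C \<le> sum f B"
proof -
  have fin: "finite C" "finite B" using assms by (meson finite_subset)+
  have "card (C - B) = card (B - C)"
    using fin assms(4) by (metis card_Diff_subset_Int Int_commute finite_Int)
  then have "sum f (C - B) \<le> sum f (B - C)"
    using assms fin by (intro sum_le_bij_compare) auto
  moreover have "sum f C = sum f (C \<inter> B) + sum f (C - B)"
    using fin by (metis sum.Int_Diff)
  moreover have "sum f B = sum f (C \<inter> B) + sum f (B - C)"
    using fin by (metis sum.Int_Diff Int_commute)
  ultimately show ?thesis by linarith
qed

lemma smallest_avg:
  fixes f :: "'a \<Rightarrow> real"
  assumes "finite A" "C \<subseteq> A" "\<forall>x\<in>C. \<forall>y\<in>A - C. f x \<le> f y"
  shows "real (card A) * sum f C \<le> real (card C) * sum f A"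
proof -
  have fin: "finite C" using assms by (meson finite_subset)
  have "(\<Sum>x\<in>C. \<Sum>y\<in>A - C. f x) \<le> (\<Sum>x\<in>C. \<Sum>y\<in>A - C. f y)"
    using assms by (intro sum_mono) auto
  then have 1: "real (card (A - C)) * sum f C \<le> real (card C) * sum f (A - C)"
    by (simp add: sum_distrib_left sum_distrib_right mult.commute)
  have ca: "real (card A) = real (card C) + real (card (A - C))"
    using assms fin by (simp add: card_Diff_subset of_nat_diff card_mono)
  have sa: "sum f A = sum f C + sum f (A - C)"
    using assms fin by (metis add.commute sum.subset_diff)
  show ?thesis using 1 unfolding ca sa by (simp add: algebra_simps)
qed


lemma group_Xs:
  fixes F :: "'x::finite \<Rightarrow> 's \<Rightarrow> 'x" and g :: "'x \<Rightarrow> real"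
  shows "(\<Sum>xh\<in>UNIV. g xh) = (\<Sum>x\<in>Xs F s. \<Sum>xh\<in>Fplus F s x. g xh)"
proof -
  have "(\<Sum>x\<in>Xs F s. sum g {xh. xh \<in> UNIV \<and> F xh s = x}) = sum g UNIV"
    by (rule sum.group) (auto simp: Xs_def)
  then show ?thesis by (simp add: Fplus_def)
qed

theorem theorem6:
  fixes p :: "'s::finite \<Rightarrow> real"
    and E :: "'x::finite \<Rightarrow> 's \<Rightarrow> bool list"
    and F :: "'x \<Rightarrow> 's \<Rightarrow> 'x"
    and Q :: "'x \<Rightarrow> real"
    and Ns :: "'s \<Rightarrow> nat"
    and k :: nat
    and C :: "'s \<Rightarrow> 'x set"
  assumes alph: "CARD('s) \<ge> 2"
    and p_pos: "\<forall>s. p s > 0"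
    and p_sum: "(\<Sum>s\<in>UNIV. p s) = 1"
    and k_pos: "k > 0"
    and N_def: "CARD('x) = 2 ^ k"
    and Ns_pos: "\<forall>s. Ns s > 0"
    and Ns_sum: "(\<Sum>s\<in>UNIV. Ns s) = CARD('x)"
    and sA: "saeds E F"
    and card_Xs: "\<forall>s. card (Xs F s) = Ns s"
    and big: "\<forall>s. card {x \<in> Xs F s. card (Fplus F s x) = 2 ^ (k - ceil_lg (Ns s) + 1)}
                   = 2 ^ ceil_lg (Ns s) - Ns s"
    and sizes: "\<forall>s. \<forall>x \<in> Xs F s. card (Fplus F s x) = 2 ^ (k - ceil_lg (Ns s) + 1)
                   \<or> card (Fplus F s x) = 2 ^ (k - ceil_lg (Ns s))"
    and fixed_len: "\<forall>s. \<forall>x \<in> Xs F s. \<forall>xh \<in> Fplus F s x.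
                   real (length (E xh s)) = log 2 (real (card (Fplus F s x)))"
    and irr: "irreducible_chain p F"
    and stat: "stationary p F Q"
    and C_small: "\<forall>s. smallest_set (Xs F s) (Qt F Q s) (2 * Ns s - 2 ^ ceil_lg (Ns s)) (C s)"
  shows "avg_len p Q E
           \<le> entropy p + kl_div p (\<lambda>s. real (Ns s) / real CARD('x))
              + (\<Sum>s\<in>UNIV. p s * (nu_val (Ns s) (Qt F Q s) (C s) - mu_pi (Ns s)))
       \<and> entropy p + kl_div p (\<lambda>s. real (Ns s) / real CARD('x))
              + (\<Sum>s\<in>UNIV. p s * (nu_val (Ns s) (Qt F Q s) (C s) - mu_pi (Ns s)))
           \<le> entropy p + kl_div p (\<lambda>s. real (Ns s) / real CARD('x))
              + (\<Sum>s\<in>UNIV. p s * nu_val (Ns s) (Qt F Q s) (C s))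
       \<and> (\<forall>s. 0 \<le> mu_pi (Ns s) \<and> mu_pi (Ns s) \<le> sigma_const)
       \<and> (\<forall>s. 0 \<le> nu_val (Ns s) (Qt F Q s) (C s)
              \<and> nu_val (Ns s) (Qt F Q s) (C s) < nu_bound (Ns s)
              \<and> nu_bound (Ns s) \<le> 1)"
  proof -
  have Qnn: "\<forall>x. Q x \<ge> 0" and Qsum: "(\<Sum>x\<in>UNIV. Q x) = 1"
    and Qeq: "\<forall>x. Q x = (\<Sum>xh\<in>UNIV. \<Sum>s\<in>UNIV. if F xh s = x then Q xh * p s else 0)"
    using stat unfolding stationary_def by auto
  obtain x0 where x0: "Q x0 > 0"
  proof -
    have "\<exists>x. Q x > 0"
    proof (rule ccontr)
      assume "\<not> ?thesis"
      then have "\<forall>x. Q x = 0" using Qnn by (metis less_eq_real_def)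
      then show False using Qsum by simp
    qed
    then show ?thesis using that by blast
  qed
  have Qpos: "Q y > 0" for y
  proof -
    have "(x0, y) \<in> (chain_edges p F)\<^sup>*" using irr unfolding irreducible_chain_def by blast
    then show ?thesis
    proof (induction rule: rtrancl_induct)
      case base then show ?case using x0 .
    next
      case (step y z)
      then obtain s where s: "z = F y s" unfolding chain_edges_def by auto
      have nn: "\<forall>a t. 0 \<le> (if F a t = z then Q a * p t else 0)" using Qnn p_pos
        by (simp add: less_imp_le)
      have "Q y * p s = (if F y s = z then Q y * p s else 0)" using s by simp
      also have "\<dots> \<le> (\<Sum>t\<in>UNIV. if F y t = z then Q y * p t else 0)"
        by (rule member_le_sum) (use nn in auto)
      also have "\<dots> \<le> (\<Sum>a\<in>UNIV. \<Sum>t\<in>UNIV. if F a t = z then Q a * p t else 0)"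
        by (rule member_le_sum[where f="\<lambda>a. \<Sum>t\<in>UNIV. if F a t = z then Q a * p t else 0"])
           (use nn in \<open>auto intro: sum_nonneg\<close>)
      also have "\<dots> = Q z" using Qeq by simp
      finally show ?case using step(3) p_pos by (meson mult_pos_pos order_less_le_trans)
    qed
  qed
  have Ns_le: "Ns s \<le> 2 ^ k" for s
  proof -
    have "Ns s \<le> (\<Sum>s\<in>UNIV. Ns s)" by (rule member_le_sum) auto
    then show ?thesis using Ns_sum N_def by simp
  qed
  define ks where "ks = (\<lambda>s. ceil_lg (Ns s))"
  have ksb: "Ns s \<le> 2 ^ ks s" "2 ^ ks s < 2 * Ns s" for s
    using ceil_lg_bounds[of "Ns s"] Ns_pos unfolding ks_def by auto
  have ks_le: "ks s \<le> k" for s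
  proof -
    have "(2::nat) ^ ks s < 2 ^ Suc k" using ksb(2)[of s] Ns_le[of s] by simp
    then have "ks s < Suc k" by (rule power_less_imp_less_exp[rotated]) simp
    then show ?thesis by simp
  qed
  have QtXs: "(\<Sum>x\<in>Xs F s. Qt F Q s x) = 1" for s
    unfolding Qt_def using group_Xs[of Q F s, symmetric] Qsum by (rule trans)
  have Qtpos: "x \<in> Xs F s \<Longrightarrow> Qt F Q s x > 0" for s x
  proof -
    assume "x \<in> Xs F s"
    then obtain a where a: "F a s = x" unfolding Xs_def by auto
    have "Q a \<le> Qt F Q s x" unfolding Qt_def
      by (rule member_le_sum) (use a Qnn in \<open>auto simp: Fplus_def\<close>)
    then show ?thesis using Qpos[of a] by simp
  qed
  have fXs: "finite (Xs F s)" for s by simp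
  have mpos: "2 * Ns s - 2 ^ ks s > 0" for s using ksb[of s] by simp
  have Csub: "C s \<subseteq> Xs F s" and Ccard: "card (C s) = 2 * Ns s - 2 ^ ks s"
    and Csm: "\<forall>x\<in>C s. \<forall>y\<in>Xs F s - C s. Qt F Q s x \<le> Qt F Q s y" for s
    using C_small unfolding smallest_set_def ks_def by auto
  have Cne: "C s \<noteq> {}" for s using Ccard[of s] mpos[of s] by auto
  have sumC_pos: "(\<Sum>x\<in>C s. Qt F Q s x) > 0" for s
    using Cne[of s] Csub[of s] Qtpos
    by (intro sum_pos) (auto intro: finite_subset[OF Csub[of s]])
  have sumC_le: "real (Ns s) * (\<Sum>x\<in>C s. Qt F Q s x) \<le> real (2 * Ns s - 2 ^ ks s)" for s
    using smallest_avg[OF fXs Csub[of s] Csm[of s]] QtXs[of s] Ccard[of s] card_Xs by simp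
  have nb: "nu_bound (Ns s) = real (2 * Ns s - 2 ^ ks s) / real (Ns s)" for s
    using ksb[of s] unfolding nu_bound_def ks_def
    by (simp add: of_nat_diff)
  have nu_props: "0 \<le> nu_val (Ns s) (Qt F Q s) (C s)
              \<and> nu_val (Ns s) (Qt F Q s) (C s) < nu_bound (Ns s)
              \<and> nu_bound (Ns s) \<le> 1" for s
  proof -
    have N0: "real (Ns s) > 0" using Ns_pos by simp
    define M where "M = real (2 * Ns s - 2 ^ ks s)"
    have A: "(\<Sum>x\<in>C s. Qt F Q s x) \<le> M / real (Ns s)"
      using sumC_le[of s] N0 unfolding M_def[symmetric] by (simp add: field_simps)
    have "M \<le> real (Ns s)" using ksb[of s] unfolding M_def by simp
    then have B: "M / real (Ns s) \<le> 1" using N0 by simp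
    have nv: "nu_val (Ns s) (Qt F Q s) (C s) = M / real (Ns s) - (\<Sum>x\<in>C s. Qt F Q s x)"
      unfolding nu_val_def nb M_def ..
    have nbM: "nu_bound (Ns s) = M / real (Ns s)" unfolding nb M_def ..
    show ?thesis unfolding nv nbM using A B sumC_pos[of s] by linarith
  qed
  have mu_props: "\<forall>s. 0 \<le> mu_pi (Ns s) \<and> mu_pi (Ns s) \<le> sigma_const"
    using mu_pi_bounds Ns_pos by blast
  have inner: "(\<Sum>xh\<in>UNIV. Q xh * real (length (E xh s)))
      \<le> real k - real (ks s) + 1 - (\<Sum>x\<in>C s. Qt F Q s x)" for s
  proof -
    define big where "big = {x \<in> Xs F s. card (Fplus F s x) = 2 ^ (k - ks s + 1)}"
    define B where "B = Xs F s - big"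
    have cbig: "card big = 2 ^ ks s - Ns s" using big unfolding big_def ks_def by simp
    have bigsub: "big \<subseteq> Xs F s" unfolding big_def by auto
    have cB: "card B = 2 * Ns s - 2 ^ ks s"
      unfolding B_def using card_Diff_subset[OF finite_subset[OF bigsub] bigsub] cbig card_Xs ksb[of s]
      by simp
    have len: "x \<in> Xs F s \<Longrightarrow> xh \<in> Fplus F s x \<Longrightarrow>
        real (length (E xh s)) = real k - real (ks s) + (if x \<in> big then 1 else 0)" for x xh
    proof -
      assume x: "x \<in> Xs F s" and xh: "xh \<in> Fplus F s x"
      have l: "real (length (E xh s)) = log 2 (real (card (Fplus F s x)))"
        using fixed_len x xh by blast
      have kk: "real (k - ks s) = real k - real (ks s)" using ks_le[of s] by simp
      have lp: "log 2 (real ((2::nat) ^ n)) = real n" for n by (simp add: log_nat_power)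
      show ?thesis
      proof (cases "x \<in> big")
        case True
        then have "card (Fplus F s x) = 2 ^ (k - ks s + 1)" unfolding big_def by simp
        then have "real (length (E xh s)) = real (k - ks s + 1)" using l lp by metis
        then show ?thesis using True kk by simp
      next
        case False
        then have "card (Fplus F s x) = 2 ^ (k - ks s)"
          using sizes x unfolding big_def ks_def by auto
        then have "real (length (E xh s)) = real (k - ks s)" using l lp by metis
        then show ?thesis using False kk by simp
      qed
    qed
    have "(\<Sum>xh\<in>UNIV. Q xh * real (length (E xh s)))
        = (\<Sum>x\<in>Xs F s. \<Sum>xh\<in>Fplus F s x. Q xh * real (length (E xh s)))"
      by (rule group_Xs)
    also have "\<dots> = (\<Sum>x\<in>Xs F s. Qt F Q s x * (real k - real (ks s) + (if x \<in> big then 1 else 0)))"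
      unfolding Qt_def sum_distrib_right
      by (intro sum.cong refl) (simp add: len)
    also have "\<dots> = (real k - real (ks s)) * (\<Sum>x\<in>Xs F s. Qt F Q s x)
        + (\<Sum>x\<in>Xs F s. if x \<in> big then Qt F Q s x else 0)"
    proof -
      have "(\<Sum>x\<in>Xs F s. Qt F Q s x * (real k - real (ks s) + (if x \<in> big then 1 else 0)))
          = (\<Sum>x\<in>Xs F s. (real k - real (ks s)) * Qt F Q s x + (if x \<in> big then Qt F Q s x else 0))"
        by (intro sum.cong refl) (simp add: algebra_simps)
      then show ?thesis by (simp only: sum.distrib sum_distrib_left)
    qed
    also have "(\<Sum>x\<in>Xs F s. if x \<in> big then Qt F Q s x else 0) = (\<Sum>x\<in>big. Qt F Q s x)"
      using bigsub by (simp add: sum.If_cases Int_absorb1)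
    also have "(\<Sum>x\<in>big. Qt F Q s x) = 1 - (\<Sum>x\<in>B. Qt F Q s x)"
      using QtXs[of s] sum.subset_diff[OF bigsub fXs, of "Qt F Q s"] unfolding B_def by simp
    finally have eq: "(\<Sum>xh\<in>UNIV. Q xh * real (length (E xh s)))
        = real k - real (ks s) + 1 - (\<Sum>x\<in>B. Qt F Q s x)" using QtXs[of s] by simp
    have "(\<Sum>x\<in>C s. Qt F Q s x) \<le> (\<Sum>x\<in>B. Qt F Q s x)"
      by (rule smallest_sum_le[OF fXs Csub[of s]]) (use cB Ccard[of s] Csm[of s] in \<open>auto simp: B_def\<close>)
    then show ?thesis using eq by simp
  qed
  have HD: "entropy p + kl_div p (\<lambda>s. real (Ns s) / real CARD('x))
      = (\<Sum>s\<in>UNIV. p s * (real k - log 2 (real (Ns s))))"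
  proof -
    have "p s * log 2 (p s / (real (Ns s) / real CARD('x))) - p s * log 2 (p s)
        = p s * (real k - log 2 (real (Ns s)))" for s
    proof -
      have ps: "p s > 0" using p_pos by simp
      have ns: "real (Ns s) > 0" using Ns_pos by simp
      have cx: "real CARD('x) = 2 ^ k" using N_def by simp
      have q: "real (Ns s) / real CARD('x) > 0" using ns cx by simp
      have "log 2 (p s / (real (Ns s) / real CARD('x))) = log 2 (p s) - log 2 (real (Ns s) / real CARD('x))"
        using ps q by (rule log_divide_pos)
      also have "log 2 (real (Ns s) / real CARD('x)) = log 2 (real (Ns s)) - log 2 ((2::real) ^ k)"
        unfolding cx using ns by (intro log_divide_pos) auto
      also have "log 2 ((2::real) ^ k) = real k" by (simp add: log_nat_power)
      finally have eqL: "log 2 (p s / (real (Ns s) / real CARD('x))) = log 2 (p s) - (log 2 (real (Ns s)) - real k)" .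
      show ?thesis unfolding eqL by (simp add: algebra_simps)
    qed
    then show ?thesis unfolding entropy_def kl_div_def
      by (simp add: sum_subtractf[symmetric])
  qed
  have L: "avg_len p Q E = (\<Sum>s\<in>UNIV. p s * (\<Sum>xh\<in>UNIV. Q xh * real (length (E xh s))))"
    unfolding avg_len_def by (subst sum.swap) (simp add: sum_distrib_left mult.assoc)
  have per: "real k - real (ks s) + 1 - (\<Sum>x\<in>C s. Qt F Q s x)
      = real k - log 2 (real (Ns s)) + (nu_val (Ns s) (Qt F Q s) (C s) - mu_pi (Ns s))" for s
  proof -
    have N0: "real (Ns s) > 0" using Ns_pos by simp
    have "nu_val (Ns s) (Qt F Q s) (C s) - mu_pi (Ns s)
        = 1 - (\<Sum>x\<in>C s. Qt F Q s x) - real (ks s) + log 2 (real (Ns s))"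
      unfolding nu_val_def nu_bound_def mu_pi_def ks_def using N0 by (simp add: field_simps)
    then show ?thesis by simp
  qed
  have part1: "avg_len p Q E
           \<le> entropy p + kl_div p (\<lambda>s. real (Ns s) / real CARD('x))
              + (\<Sum>s\<in>UNIV. p s * (nu_val (Ns s) (Qt F Q s) (C s) - mu_pi (Ns s)))"
  proof -
    have "avg_len p Q E \<le> (\<Sum>s\<in>UNIV. p s * (real k - log 2 (real (Ns s))
         + (nu_val (Ns s) (Qt F Q s) (C s) - mu_pi (Ns s))))"
      unfolding L using inner per p_pos
      by (intro sum_mono mult_left_mono) (auto simp: less_imp_le)
    also have "\<dots> = entropy p + kl_div p (\<lambda>s. real (Ns s) / real CARD('x))
              + (\<Sum>s\<in>UNIV. p s * (nu_val (Ns s) (Qt F Q s) (C s) - mu_pi (Ns s)))"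
      unfolding HD by (simp add: distrib_left sum.distrib)
    finally show ?thesis .
  qed
  have part2: "(\<Sum>s\<in>UNIV. p s * (nu_val (Ns s) (Qt F Q s) (C s) - mu_pi (Ns s)))
      \<le> (\<Sum>s\<in>UNIV. p s * nu_val (Ns s) (Qt F Q s) (C s))"
    using mu_props p_pos by (intro sum_mono mult_left_mono) (auto simp: less_imp_le)
  show ?thesis using part1 part2 mu_props nu_props by simp
qed

end
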